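(* Let $\mathcal{A}$ be a one-dimensional cellular automaton which is not sensitive to initial conditions, and let $\mu$ be any complete Bernoulli measure on $Q^{\mathbb{Z}}$. Then the set $L_\mu(\mathcal{A})$ of $\mu$-persistent words of $\mathcal{A}$ is exactly the set of bricks of wall for $\mathcal{A}$.
   Context: A one-dimensional cellular automaton (CA) $\mathcal{A}$ is given by a finite alphabet $Q$, a radius $r\ge 0$ and a local rule $\delta:Q^{2r+1}\to Q$; it acts on configurations $c\in Q^{\mathbb{Z}}$ by $\mathcal{A}(c)_i=\delta(c_{i-r},\dots,c_{i+r})$. For a word $u\in Q^*$ and $i\in\mathbb{Z}$, the cylinder is $[u]_i=\{c\in Q^{\mathbb{Z}}: c_ic_{i+1}\cdots c_{i+|u|-1}=u\}$. A Bernoulli measure $\mu$ on $Q^{\mathbb{Z}}$ is given by a probability vector $(p_a)_{a\in Q}$ with $\mu([u]_i)=\prod_{a\in Q}p_a^{|u|_a}$ for all $u,i$, where $|u|_a$ is the number of occurrences of $a$ in $u$; it is complete if $p_a>0$ for all $a$; the uniform measure has $p_a=1/|Q|$. For $n\ge0$, $\mathcal{A}^n\mu$ is the measure $U\mapsto\mu(\mathcal{A}^{-n}(U))$. A word $u\in Q^*$ is vanishing for $(\mathcal{A},\mu)$ if $\lim_{n\to\infty}\mathcal{A}^n\mu([u]_0)=0$, and persistent otherwise; $L_\mu(\mathcal{A})$ denotes the set of persistent words. The $\mu$-limit set is $\Lambda_\mu(\mathcal{A})=\{c\in Q^{\mathbb{Z}}:\text{every finite subword of }c\text{ lies in }L_\mu(\mathcal{A})\}$.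 Walls: for $u\in Q^*$ let $\langle u\rangle=[u]_{-|u|/2}$ if $|u|$ is even and $\langle u\rangle=[u]_{-(|u|+1)/2}$ if $|u|$ is odd. A wall for $\mathcal{A}$ is a sequence $(w_n)_{n\ge0}$ of nonempty words over $Q$ such that (1) for every $c\in\langle w_0\rangle$ and every $n\ge1$, $\mathcal{A}^n(c)\in\langle w_n\rangle$, and (2) the sequence $(|w_n|)_{n\ge0}$ is non-increasing. The word $w_0$ is the foot of the wall. A word $w$ is a brick of the wall $(w_n)$ if there are integers $p\ge1$, $n_0\ge0$ with $w_{pn+n_0}=w$ for all $n\ge0$. A word is a brick of wall for $\mathcal{A}$ if it is a brick of some wall for $\mathcal{A}$. Sensitivity: equip $Q^{\mathbb{Z}}$ with the Cantor metric $d(c,c')=2^{-\min\{|i|:c_i\neq c'_i\}}$. $\mathcal{A}$ is sensitive to initial conditions if there is $\varepsilon>0$ such that for every $c$ and every $\eta>0$ there exist $c'$ with $d(c,c')<\eta$ and $n\ge0$ with $d(\mathcal{A}^n(c),\mathcal{A}^n(c'))\ge\varepsilon$. *)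

theory Defs
  imports "HOL-Probability.Probability"
begin

definition ca_global :: "nat \<Rightarrow> ('q list \<Rightarrow> 'q) \<Rightarrow> (int \<Rightarrow> 'q) \<Rightarrow> (int \<Rightarrow> 'q)" where
  "ca_global r \<delta> c = (\<lambda>i. \<delta> (map (\<lambda>j. c (i + j)) [- int r..int r]))"

definition cyl :: "'q list \<Rightarrow> int \<Rightarrow> (int \<Rightarrow> 'q) set" where
  "cyl u i = {c. \<forall>k<length u. c (i + int k) = u ! k}"

definition centered_cyl :: "'q list \<Rightarrow> (int \<Rightarrow> 'q) set" where
  "centered_cyl u = (if even (length u) then cyl u (- (int (length u) div 2))
                     else cyl u (- ((int (length u) + 1) div 2)))"

definition bernoulli :: "'q pmf \<Rightarrow> (int \<Rightarrow> 'q) measure" where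
  "bernoulli p = (\<Pi>\<^sub>M i\<in>(UNIV::int set). measure_pmf p)"

definition complete_bernoulli :: "'q pmf \<Rightarrow> bool" where
  "complete_bernoulli p \<longleftrightarrow> (\<forall>a. pmf p a > 0)"

text \<open>(A^n mu)([u]_0) = mu(A^{-n}([u]_0)).\<close>
definition push_cyl :: "nat \<Rightarrow> ('q list \<Rightarrow> 'q) \<Rightarrow> 'q pmf \<Rightarrow> nat \<Rightarrow> 'q list \<Rightarrow> real" where
  "push_cyl r \<delta> p n u = measure (bernoulli p) (((ca_global r \<delta>) ^^ n) -` cyl u 0)"

definition persistent :: "nat \<Rightarrow> ('q list \<Rightarrow> 'q) \<Rightarrow> 'q pmf \<Rightarrow> 'q list \<Rightarrow> bool" where
  "persistent r \<delta> p u \<longleftrightarrow> \<not> ((\<lambda>n. push_cyl r \<delta> p n u) \<longlonglongrightarrow> 0)"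

definition persistent_words :: "nat \<Rightarrow> ('q list \<Rightarrow> 'q) \<Rightarrow> 'q pmf \<Rightarrow> 'q list set" where
  "persistent_words r \<delta> p = {u. persistent r \<delta> p u}"

definition is_wall :: "nat \<Rightarrow> ('q list \<Rightarrow> 'q) \<Rightarrow> (nat \<Rightarrow> 'q list) \<Rightarrow> bool" where
  "is_wall r \<delta> w \<longleftrightarrow>
     (\<forall>n. w n \<noteq> []) \<and>
     (\<forall>c\<in>centered_cyl (w 0). \<forall>n\<ge>1. ((ca_global r \<delta>) ^^ n) c \<in> centered_cyl (w n)) \<and>
     (\<forall>n. length (w (Suc n)) \<le> length (w n))"

definition is_brick :: "(nat \<Rightarrow> 'q list) \<Rightarrow> 'q list \<Rightarrow> bool" where
  "is_brick w v \<longleftrightarrow> (\<exists>p n0. p \<ge> 1 \<and> (\<forall>n. w (p * n + n0) = v))"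

definition bricks_of_walls :: "nat \<Rightarrow> ('q list \<Rightarrow> 'q) \<Rightarrow> 'q list set" where
  "bricks_of_walls r \<delta> = {v. \<exists>w. is_wall r \<delta> w \<and> is_brick w v}"

definition cantor_dist :: "(int \<Rightarrow> 'q) \<Rightarrow> (int \<Rightarrow> 'q) \<Rightarrow> real" where
  "cantor_dist c c' = (if c = c' then 0
     else (1/2) ^ (LEAST k::nat. \<exists>i. \<bar>i\<bar> = int k \<and> c i \<noteq> c' i))"

definition sensitive :: "nat \<Rightarrow> ('q list \<Rightarrow> 'q) \<Rightarrow> bool" where
  "sensitive r \<delta> \<longleftrightarrow> (\<exists>\<epsilon>>0. \<forall>c. \<forall>\<eta>>0. \<exists>c' n.
     cantor_dist c c' < \<eta> \<and>
     cantor_dist (((ca_global r \<delta>) ^^ n) c) (((ca_global r \<delta>) ^^ n) c') \<ge> \<epsilon>)"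

end

theory Submission
  imports Defs
begin

lemma space_bern[simp]: "space (bernoulli p) = UNIV"
  by (simp add: bernoulli_def space_PiM)

lemma meas_map_coords:
  "(\<lambda>\<omega>::int \<Rightarrow> 'q::countable. map (\<lambda>j. \<omega> (i + j)) js) \<in> measurable (PiM UNIV (\<lambda>_. count_space UNIV)) (count_space UNIV)"
proof (induction js)
  case Nil
  then show ?case by simp
next
  case (Cons a js)
  have 1: "\<And>x. (\<lambda>\<omega>::int \<Rightarrow> 'q. x # map (\<lambda>j. \<omega> (i + j)) js) \<in> measurable (PiM UNIV (\<lambda>_. count_space UNIV)) (count_space UNIV)"
    by (rule measurable_compose[OF Cons.IH]) simp
  have 2: "(\<lambda>\<omega>::int \<Rightarrow> 'q. \<omega> (i + a)) \<in> measurable (PiM UNIV (\<lambda>_. count_space UNIV)) (count_space UNIV)"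
    by measurable
  from measurable_compose_countable[OF 1 2] show ?case by simp
qed

lemma meas_ca: "ca_global r (\<delta>::('q::finite) list \<Rightarrow> 'q) \<in> measurable (bernoulli p) (bernoulli p)"
  unfolding bernoulli_def ca_global_def
  apply (rule measurable_PiM_single')
  subgoal for i
    apply (subst measurable_cong_sets[where M'="PiM UNIV (\<lambda>_. count_space UNIV)" and N'="count_space UNIV"])
      apply (rule sets_PiM_cong) apply simp apply simp apply simp
    apply (rule measurable_compose[where g=\<delta>, OF meas_map_coords]) 
    apply simp done
  apply (simp add: space_PiM)
  done

lemma meas_iter: "((ca_global r (\<delta>::('q::finite) list \<Rightarrow> 'q)) ^^ n) \<in> measurable (bernoulli p) (bernoulli p)"
  proof (induction n)
  case (Suc n) show ?case using measurable_comp[OF Suc meas_ca] by (simp add: comp_def)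
qed simp

lemma cyl_sets: "cyl u i \<in> sets (bernoulli p)"
proof (cases "u = []")
  case True
  then have "cyl u i = space (bernoulli p)" by (simp add: cyl_def)
  then show ?thesis by (metis sets.top)
next
  case False
  have "cyl u i = (\<Inter>k\<in>{..<length u}. {x \<in> space (bernoulli p). x (i + int k) = u ! k})"
    by (auto simp: cyl_def)
  also have "\<dots> \<in> sets (bernoulli p)"
    unfolding bernoulli_def
    using False by (intro sets.finite_INT) auto
  finally show ?thesis .
qed

lemma pre_sets: "((ca_global r (\<delta>::('q::finite) list \<Rightarrow> 'q)) ^^ n) -` cyl u i \<in> sets (bernoulli p)"
  using measurable_sets[OF meas_iter cyl_sets] by simp

lemma emeasure_cyl: "emeasure (bernoulli p) (cyl w a) = ennreal (\<Prod>k<length w. pmf p (w ! k))"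
proof -
  let ?J = "(\<lambda>k. a + int k) ` {..<length w}"
  let ?A = "\<lambda>i. {w ! nat (i - a)}"
  have "cyl w a = prod_emb UNIV (\<lambda>_. measure_pmf p) ?J (Pi\<^sub>E ?J ?A)"
    by (auto simp: cyl_def prod_emb_def space_PiM PiE_iff)
  then have "emeasure (bernoulli p) (cyl w a) = (\<Prod>i\<in>?J. emeasure (measure_pmf p) (?A i))"
    unfolding bernoulli_def
    by (simp add: emeasure_PiM_emb prob_space_measure_pmf)
  also have "\<dots> = (\<Prod>k<length w. emeasure (measure_pmf p) (?A (a + int k)))"
    by (subst prod.reindex) (auto simp: inj_on_def)
  also have "\<dots> = (\<Prod>k<length w. ennreal (pmf p (w ! k)))"
    by (simp add: emeasure_pmf_single)
  also have "\<dots> = ennreal (\<Prod>k<length w. pmf p (w ! k))"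
    by (simp add: prod_ennreal)
  finally show ?thesis .
qed

lemma measure_cyl: "measure (bernoulli p) (cyl w a) = (\<Prod>k<length w. pmf p (w ! k))"
  by (rule measure_eq_emeasure_eq_ennreal) (auto simp: emeasure_cyl prod_nonneg)

lemma prob_bern: "prob_space (bernoulli p)"
  unfolding bernoulli_def by (auto intro!: prob_space_PiM prob_space_measure_pmf)

lemma indep_coords: "prob_space.indep_vars (bernoulli p) (\<lambda>_. measure_pmf p) (\<lambda>i \<omega>. \<omega> i) UNIV"
proof -
  interpret P: prob_space "bernoulli p" by (rule prob_bern)
  interpret PP: product_prob_space "\<lambda>_::int. measure_pmf p" UNIV
    by (simp add: product_prob_spaceI prob_space_measure_pmf)
  have rv: "\<And>i. (\<lambda>\<omega>. \<omega> i) \<in> measurable (bernoulli p) (measure_pmf p)"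
    unfolding bernoulli_def by (rule measurable_component_singleton) simp
  show ?thesis
  proof (subst P.indep_vars_iff_distr_eq_PiM[OF _ rv])
    have 1: "(\<lambda>x::int\<Rightarrow>'a. \<lambda>i\<in>UNIV. x i) = (\<lambda>x. x)" by (auto simp: restrict_def)
    have 2: "\<And>i. distr (bernoulli p) (measure_pmf p) (\<lambda>\<omega>. \<omega> i) = measure_pmf p"
      unfolding bernoulli_def by (rule PP.PiM_component) simp
    show "distr (bernoulli p) (Pi\<^sub>M UNIV (\<lambda>_. measure_pmf p)) (\<lambda>x. \<lambda>i\<in>UNIV. x i) =
      Pi\<^sub>M UNIV (\<lambda>i. distr (bernoulli p) (measure_pmf p) (\<lambda>\<omega>. \<omega> i))"
      unfolding 1 2 by (simp add: bernoulli_def)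
  qed simp
qed

lemma no_occ_measure:
  fixes s :: "nat \<Rightarrow> int" and b :: "'a list"
  assumes disj: "\<And>j j'. j \<noteq> j' \<Longrightarrow> {s j..<s j + int (length b)} \<inter> {s j'..<s j' + int (length b)} = {}"
  shows "measure (bernoulli p) {x. \<forall>j<t. x \<notin> cyl b (s j)} = (1 - (\<Prod>k<length b. pmf p (b ! k))) ^ t"
proof (cases "t = 0")
  case True
  interpret P: prob_space "bernoulli p" by (rule prob_bern)
  show ?thesis using True P.prob_space by simp
next
  case False
  interpret P: prob_space "bernoulli p" by (rule prob_bern)
  define K where "K j = {s j..<s j + int (length b)}" for j
  define Q where "Q j g = (\<exists>k<length b. g (s j + int k) \<noteq> b ! k)" for j and g :: "int \<Rightarrow> 'a"
  have dK: "disjoint_family_on K {..<t}"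
    using disj by (auto simp: disjoint_family_on_def K_def)
  have iv: "P.indep_vars (\<lambda>j. PiM (K j) (\<lambda>_. measure_pmf p)) (\<lambda>j \<omega>. restrict (\<lambda>i. \<omega> i) (K j)) {..<t}"
    by (rule P.indep_vars_restrict[OF indep_coords _ dK]) simp
  have ie: "P.indep_events (\<lambda>j. {x \<in> space (bernoulli p). Q j (restrict (\<lambda>i. x i) (K j))}) {..<t}"
  proof (rule P.indep_eventsI_indep_vars[OF iv])
    fix j assume "j \<in> {..<t}"
    have "{x \<in> space (Pi\<^sub>M (K j) (\<lambda>_. measure_pmf p)). Q j x} =
       (\<Union>k\<in>{..<length b}. {x \<in> space (Pi\<^sub>M (K j) (\<lambda>_. measure_pmf p)). x (s j + int k) \<noteq> b ! k})"
      by (auto simp: Q_def)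
    also have "\<dots> \<in> sets (Pi\<^sub>M (K j) (\<lambda>_. measure_pmf p))"
    proof (rule sets.finite_UN)
      fix k assume "k \<in> {..<length b}"
      then have "s j + int k \<in> K j" by (auto simp: K_def)
      then show "{x \<in> space (Pi\<^sub>M (K j) (\<lambda>_. measure_pmf p)). x (s j + int k) \<noteq> b ! k} \<in> sets (Pi\<^sub>M (K j) (\<lambda>_. measure_pmf p))"
        by measurable
    qed simp
    finally show "{x \<in> space (Pi\<^sub>M (K j) (\<lambda>_. measure_pmf p)). Q j x} \<in> sets (Pi\<^sub>M (K j) (\<lambda>_. measure_pmf p))" .
  qed
  have E: "{x \<in> space (bernoulli p). Q j (restrict (\<lambda>i. x i) (K j))} = UNIV - cyl b (s j)" for j
    by (auto simp: Q_def K_def cyl_def)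
  have "{x. \<forall>j<t. x \<notin> cyl b (s j)} = (\<Inter>j\<in>{..<t}. {x \<in> space (bernoulli p). Q j (restrict (\<lambda>i. x i) (K j))})"
    using False unfolding E by auto
  also have "P.prob \<dots> = (\<Prod>j\<in>{..<t}. P.prob {x \<in> space (bernoulli p). Q j (restrict (\<lambda>i. x i) (K j))})"
    using ie False unfolding P.indep_events_def by auto
  also have "\<dots> = (\<Prod>j\<in>{..<t}. 1 - (\<Prod>k<length b. pmf p (b ! k)))"
  proof (rule prod.cong)
    fix j
    have "P.prob (UNIV - cyl b (s j)) = 1 - P.prob (cyl b (s j))"
      using P.prob_compl[OF cyl_sets] by simp
    then show "P.prob {x \<in> space (bernoulli p). Q j (restrict (\<lambda>i. x i) (K j))} = 1 - (\<Prod>k<length b. pmf p (b ! k))"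
      unfolding E measure_cyl by simp
  qed simp
  finally show ?thesis by simp
qed

lemma ca_local:
  assumes "\<And>j. \<bar>j\<bar> \<le> int r \<Longrightarrow> x (i + j) = y (i + j)"
  shows "ca_global r \<delta> x i = ca_global r \<delta> y i"
  unfolding ca_global_def using assms by (auto intro!: arg_cong[where f=\<delta>] map_cong)

lemma ca_shift: "ca_global r \<delta> (\<lambda>i. x (i + d)) = (\<lambda>i. ca_global r \<delta> x (i + d))"
  unfolding ca_global_def by (simp add: ac_simps)

lemma iter_shift: "(ca_global r \<delta> ^^ n) (\<lambda>i. x (i + d)) = (\<lambda>i. (ca_global r \<delta> ^^ n) x (i + d))"
  by (induction n) (simp_all add: ca_shift)

lemma ca_periodic:
  assumes "\<And>i. x (i + M) = x i"
  shows "ca_global r \<delta> x (i + M) = ca_global r \<delta> x i"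
proof -
  have "\<And>j. x (i + M + j) = x (i + j)" using assms[of "i + j" for j] by (simp add: ac_simps)
  then show ?thesis unfolding ca_global_def by simp
qed

lemma iter_periodic:
  assumes "\<And>i. x (i + M) = x i"
  shows "(ca_global r \<delta> ^^ n) x (i + M) = (ca_global r \<delta> ^^ n) x i"
  using assms by (induction n arbitrary: i) (simp_all add: ca_periodic)

lemma cd_le:
  assumes "\<And>i. \<bar>i\<bar> \<le> int k \<Longrightarrow> c i = c' i"
  shows "cantor_dist c c' \<le> (1/2) ^ (k + 1)"
proof (cases "c = c'")
  case True then show ?thesis by (simp add: cantor_dist_def)
next
  case False
  then obtain i where i: "c i \<noteq> c' i" by auto
  let ?L = "LEAST k::nat. \<exists>i. \<bar>i\<bar> = int k \<and> c i \<noteq> c' i"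
  have ex: "\<exists>i. \<bar>i\<bar> = int (nat \<bar>i\<bar>) \<and> c i \<noteq> c' i" using i by auto
  have "\<exists>i. \<bar>i\<bar> = int ?L \<and> c i \<noteq> c' i" by (rule LeastI_ex) (use ex in blast)
  then obtain i' where "\<bar>i'\<bar> = int ?L" "c i' \<noteq> c' i'" by auto
  then have "\<not> \<bar>i'\<bar> \<le> int k" using assms by metis
  then have "?L \<ge> k + 1" using \<open>\<bar>i'\<bar> = int ?L\<close> by linarith
  then have "(1/2::real) ^ ?L \<le> (1/2) ^ (k+1)" by (intro power_decreasing) auto
  then show ?thesis using False by (simp add: cantor_dist_def)
qed

lemma cd_lt:
  assumes "cantor_dist c c' < (1/2) ^ m" "\<bar>i\<bar> \<le> int m"
  shows "c i = c' i"
proof (rule ccontr)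
  assume ne: "c i \<noteq> c' i"
  then have cne: "c \<noteq> c'" by auto
  let ?L = "LEAST k::nat. \<exists>i. \<bar>i\<bar> = int k \<and> c i \<noteq> c' i"
  have "?L \<le> nat \<bar>i\<bar>" by (rule Least_le) (use ne in auto)
  then have "?L \<le> m" using assms(2) by linarith
  then have "(1/2::real) ^ m \<le> (1/2) ^ ?L" by (intro power_decreasing) auto
  then show False using assms(1) cne by (simp add: cantor_dist_def)
qed

lemma blocking:
  assumes "\<not> sensitive r \<delta>"
  shows "\<exists>c0 k. r \<le> k \<and> (\<forall>c'. (\<forall>i. \<bar>i\<bar> \<le> int k \<longrightarrow> c' i = c0 i) \<longrightarrow>
           (\<forall>n i. \<bar>i\<bar> \<le> int r \<longrightarrow> (ca_global r \<delta> ^^ n) c' i = (ca_global r \<delta> ^^ n) c0 i))"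
proof -
  have "(0::real) < (1/2) ^ r" by simp
  with assms obtain c \<eta> where eta: "\<eta> > 0" and
    H: "\<And>c' n. cantor_dist c c' < \<eta> \<Longrightarrow> cantor_dist ((ca_global r \<delta> ^^ n) c) ((ca_global r \<delta> ^^ n) c') < (1/2) ^ r"
    unfolding sensitive_def by (metis not_le)
  obtain n0 where n0: "(1/2::real) ^ n0 < \<eta>" using real_arch_pow_inv[OF eta, of "1/2"] by auto
  define k where "k = max r n0"
  have "(1/2::real) ^ (k + 1) \<le> (1/2) ^ n0" by (intro power_decreasing) (auto simp: k_def)
  with n0 have k: "(1/2::real) ^ (k + 1) < \<eta>" by linarith
  show ?thesis
  proof (intro exI[of _ c] exI[of _ k] conjI allI impI)
    show "r \<le> k" by (simp add: k_def)
    fix c' n i assume agree: "\<forall>i. \<bar>i\<bar> \<le> int k \<longrightarrow> c' i = c i" and i: "\<bar>i\<bar> \<le> int r"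
    have "cantor_dist c c' \<le> (1/2) ^ (k + 1)" by (rule cd_le) (use agree in auto)
    with k have "cantor_dist c c' < \<eta>" by linarith
    from cd_lt[OF H[OF this] i] show "(ca_global r \<delta> ^^ n) c' i = (ca_global r \<delta> ^^ n) c i" by simp
  qed
qed

lemma blocking_shift:
  assumes blk: "\<forall>c'. (\<forall>i. \<bar>i\<bar> \<le> int k \<longrightarrow> c' i = c0 i) \<longrightarrow>
           (\<forall>n i. \<bar>i\<bar> \<le> int r \<longrightarrow> (ca_global r \<delta> ^^ n) c' i = (ca_global r \<delta> ^^ n) c0 i)"
    and z: "\<forall>i. \<bar>i\<bar> \<le> int k \<longrightarrow> z (s + i) = c0 i" and i: "\<bar>i\<bar> \<le> int r"
  shows "(ca_global r \<delta> ^^ n) z (s + i) = (ca_global r \<delta> ^^ n) c0 i"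
proof -
  have A: "\<forall>i. \<bar>i\<bar> \<le> int k \<longrightarrow> (\<lambda>i. z (i + s)) i = c0 i"
  proof (intro allI impI)
    fix i :: int assume "\<bar>i\<bar> \<le> int k"
    then have "z (s + i) = c0 i" using z by blast
    then show "(\<lambda>i. z (i + s)) i = c0 i" by (simp only: add.commute)
  qed
  have H: "(\<forall>i. \<bar>i\<bar> \<le> int k \<longrightarrow> (\<lambda>i. z (i + s)) i = c0 i) \<longrightarrow>
           (\<forall>n i. \<bar>i\<bar> \<le> int r \<longrightarrow> (ca_global r \<delta> ^^ n) (\<lambda>i. z (i + s)) i = (ca_global r \<delta> ^^ n) c0 i)"
    by (rule spec[OF blk])
  have "(ca_global r \<delta> ^^ n) (\<lambda>i. z (i + s)) i = (ca_global r \<delta> ^^ n) c0 i"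
    using mp[OF H A] i by blast
  then have "(\<lambda>i. (ca_global r \<delta> ^^ n) z (i + s)) i = (ca_global r \<delta> ^^ n) c0 i"
    by (simp only: iter_shift)
  then show ?thesis by (simp only: add.commute)
qed

lemma region:
  assumes blk: "\<forall>c'. (\<forall>i. \<bar>i\<bar> \<le> int k \<longrightarrow> c' i = c0 i) \<longrightarrow>
           (\<forall>n i. \<bar>i\<bar> \<le> int r \<longrightarrow> (ca_global r \<delta> ^^ n) c' i = (ca_global r \<delta> ^^ n) c0 i)"
    and rk: "r \<le> k"
    and xL: "\<forall>i. \<bar>i\<bar> \<le> int k \<longrightarrow> x (sL + i) = c0 i"
    and xR: "\<forall>i. \<bar>i\<bar> \<le> int k \<longrightarrow> x (sR + i) = c0 i"
    and LR: "sL \<le> sR"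
    and agree: "\<forall>i. sL - int k \<le> i \<and> i \<le> sR + int k \<longrightarrow> y i = x i"
  shows "sL - int r \<le> i \<and> i \<le> sR + int r \<Longrightarrow> (ca_global r \<delta> ^^ n) y i = (ca_global r \<delta> ^^ n) x i"
proof (induction n arbitrary: i)
  case 0
  then show ?case using agree rk by simp
next
  case (Suc n)
  have yL: "\<forall>i. \<bar>i\<bar> \<le> int k \<longrightarrow> y (sL + i) = c0 i"
  proof (intro allI impI)
    fix i :: int assume "\<bar>i\<bar> \<le> int k"
    then have "y (sL + i) = x (sL + i)" using agree LR by (intro agree[rule_format]) linarith
    then show "y (sL + i) = c0 i" using xL \<open>\<bar>i\<bar> \<le> int k\<close> by simp
  qed
  have yR: "\<forall>i. \<bar>i\<bar> \<le> int k \<longrightarrow> y (sR + i) = c0 i"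
  proof (intro allI impI)
    fix i :: int assume "\<bar>i\<bar> \<le> int k"
    then have "y (sR + i) = x (sR + i)" using agree LR by (intro agree[rule_format]) linarith
    then show "y (sR + i) = c0 i" using xR \<open>\<bar>i\<bar> \<le> int k\<close> by simp
  qed
  show ?case
  proof (cases "\<bar>i - sL\<bar> \<le> int r")
    case True
    have e: "sL + (i - sL) = i" by simp
    from blocking_shift[OF blk yL True, of "Suc n"] blocking_shift[OF blk xL True, of "Suc n"]
    show ?thesis unfolding e by (rule trans[OF _ sym])
  next
    case F1: False
    show ?thesis
    proof (cases "\<bar>i - sR\<bar> \<le> int r")
      case True
      have e: "sR + (i - sR) = i" by simp
      from blocking_shift[OF blk yR True, of "Suc n"] blocking_shift[OF blk xR True, of "Suc n"]
      show ?thesis unfolding e by (rule trans[OF _ sym])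
    next
      case False
      with F1 Suc.prems have "sL + int r < i" "i < sR - int r" by (auto simp: abs_le_iff)
      then have "\<And>j. \<bar>j\<bar> \<le> int r \<Longrightarrow> (ca_global r \<delta> ^^ n) y (i + j) = (ca_global r \<delta> ^^ n) x (i + j)"
      proof -
        fix j :: int assume "\<bar>j\<bar> \<le> int r"
        then have "- int r \<le> j" "j \<le> int r" by (simp_all add: abs_le_iff)
        then have "sL - int r \<le> i + j \<and> i + j \<le> sR + int r"
          using \<open>sL + int r < i\<close> \<open>i < sR - int r\<close> by linarith
        then show "(ca_global r \<delta> ^^ n) y (i + j) = (ca_global r \<delta> ^^ n) x (i + j)" by (rule Suc.IH)
      qed
      then show ?thesis unfolding funpow.simps(2) comp_def by (rule ca_local)
    qed
  qed
qed

lemma eventually_periodic: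
  assumes fin: "finite F" and cl: "\<And>z. z \<in> F \<Longrightarrow> f z \<in> F" and x: "x \<in> F"
  shows "\<exists>P\<ge>1. \<forall>m\<ge>card F. \<forall>j. (f ^^ (m + P * j)) x = (f ^^ m) x"
proof -
  have inF: "(f ^^ i) x \<in> F" for i by (induction i) (auto simp: x cl)
  have "card ((\<lambda>i. (f ^^ i) x) ` {..card F}) \<le> card F"
    using inF by (intro card_mono fin) auto
  then have "\<not> inj_on (\<lambda>i. (f ^^ i) x) {..card F}"
    by (intro pigeonhole) simp
  then obtain a b where ab: "a \<le> card F" "b \<le> card F" "a \<noteq> b" "(f ^^ a) x = (f ^^ b) x"
    unfolding inj_on_def by auto
  then obtain a b where ab: "a < b" "b \<le> card F" "(f ^^ a) x = (f ^^ b) x"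
    by (metis le_less_trans linorder_neqE_nat nat_le_linear)
  have step: "(f ^^ (m + (b - a))) x = (f ^^ m) x" if "m \<ge> a" for m
  proof -
    have e: "m + (b - a) = (m - a) + b" using that ab by simp
    have "(f ^^ (m + (b - a))) x = (f ^^ (m - a)) ((f ^^ b) x)"
      unfolding e funpow_add by simp
    also have "\<dots> = (f ^^ (m - a)) ((f ^^ a) x)" using ab by simp
    also have "\<dots> = (f ^^ ((m - a) + a)) x" unfolding funpow_add by simp
    also have "\<dots> = (f ^^ m) x" using that by simp
    finally show ?thesis .
  qed
  show ?thesis
  proof (intro exI[of _ "b - a"] conjI allI impI)
    show "1 \<le> b - a" using ab by simp
    fix m j assume m: "card F \<le> m"
    show "(f ^^ (m + (b - a) * j)) x = (f ^^ m) x"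
    proof (induction j)
      case (Suc j)
      have "(f ^^ (m + (b - a) * Suc j)) x = (f ^^ ((m + (b - a) * j) + (b - a))) x" by (metis add.assoc add.commute mult_Suc_right)
      also have "\<dots> = (f ^^ (m + (b - a) * j)) x" using m ab by (intro step) simp
      finally show ?case using Suc by simp
    qed simp
  qed
qed

definition cs :: "nat \<Rightarrow> int" where
  "cs L = (if even L then - (int L div 2) else - ((int L + 1) div 2))"

lemma centered_eq: "centered_cyl u = cyl u (cs (length u))"
  by (simp add: centered_cyl_def cs_def)

lemma cyl_shift: "(\<lambda>i. x (i + d)) \<in> cyl w a \<longleftrightarrow> x \<in> cyl w (a + d)"
  by (simp add: cyl_def ac_simps)

lemma bricks_persistent:
  assumes comp: "complete_bernoulli p" and v: "v \<in> bricks_of_walls r \<delta>"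
  shows "v \<in> persistent_words r (\<delta>::('q::finite) list \<Rightarrow> 'q) p \<and> v \<noteq> []"
proof -
  interpret P: prob_space "bernoulli p" by (rule prob_bern)
  obtain w where wall: "is_wall r \<delta> w" and br: "is_brick w v" using v by (auto simp: bricks_of_walls_def)
  obtain Pd n0 where Pd: "Pd \<ge> 1" and wv: "\<And>j. w (Pd * j + n0) = v" using br by (auto simp: is_brick_def)
  have "w (Pd * 0 + n0) = v" by (rule wv)
  then have vne: "v \<noteq> []" using wall by (auto simp: is_wall_def)
  define a0 where "a0 = cs (length (w 0))"
  define av where "av = cs (length v)"
  define nav where "nav = - av"
  define C where "C = cyl (w 0) (a0 + nav)"
  have sub: "C \<subseteq> (ca_global r \<delta> ^^ n) -` cyl v 0" if n: "n = Pd * (j + 1) + n0" for n j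
  proof
    fix x assume "x \<in> C"
    then have "(\<lambda>i. x (i + nav)) \<in> cyl (w 0) a0" unfolding cyl_shift C_def by simp
    then have "(\<lambda>i. x (i + nav)) \<in> centered_cyl (w 0)" by (simp add: centered_eq a0_def)
    moreover have "n \<ge> 1" using n Pd by simp
    ultimately have "(ca_global r \<delta> ^^ n) (\<lambda>i. x (i + nav)) \<in> centered_cyl (w n)"
      using wall by (auto simp: is_wall_def)
    moreover have "w n = v" using wv[of "j+1"] n by simp
    ultimately have "(ca_global r \<delta> ^^ n) (\<lambda>i. x (i + nav)) \<in> cyl v av"
      by (simp add: centered_eq av_def)
    then have "(\<lambda>i. (ca_global r \<delta> ^^ n) x (i + nav)) \<in> cyl v av"
      by (simp only: iter_shift)
    then show "x \<in> (ca_global r \<delta> ^^ n) -` cyl v 0" unfolding cyl_shift by (simp add: nav_def)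
  qed
  have Cpos: "measure (bernoulli p) C > 0"
    unfolding C_def measure_cyl using comp by (auto simp: complete_bernoulli_def intro!: prod_pos)
  have ge: "push_cyl r \<delta> p (Pd * (j + 1) + n0) v \<ge> measure (bernoulli p) C" for j
    unfolding push_cyl_def by (rule P.finite_measure_mono[OF sub[OF refl] pre_sets])
  have "\<not> (\<lambda>n. push_cyl r \<delta> p n v) \<longlonglongrightarrow> 0"
  proof
    assume "(\<lambda>n. push_cyl r \<delta> p n v) \<longlonglongrightarrow> 0"
    from order_tendstoD(2)[OF this Cpos] obtain N where N: "\<And>n. n \<ge> N \<Longrightarrow> push_cyl r \<delta> p n v < measure (bernoulli p) C"
      by (auto simp: eventually_sequentially)
    have "N + 1 \<le> Pd * (N + 1)" using mult_le_mono1[OF Pd, of "N+1"] by simp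
    then have "Pd * (N + 1) + n0 \<ge> N" by linarith
    from N[OF this] ge[of N] show False by simp
  qed
  then show ?thesis using vne by (simp add: persistent_words_def persistent_def)
qed

lemma blk_cyl:
  fixes c0 :: "int \<Rightarrow> 'q"
  shows "x \<in> cyl (map (\<lambda>j. c0 (int j - int k)) [0..<2*k+1]) (s - int k) \<longleftrightarrow> (\<forall>i. \<bar>i\<bar> \<le> int k \<longrightarrow> x (s + i) = c0 i)"
proof
  assume H: "x \<in> cyl (map (\<lambda>j. c0 (int j - int k)) [0..<2*k+1]) (s - int k)"
  show "\<forall>i. \<bar>i\<bar> \<le> int k \<longrightarrow> x (s + i) = c0 i"
  proof (intro allI impI)
    fix i :: int assume i: "\<bar>i\<bar> \<le> int k"
    define j where "j = nat (i + int k)"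
    have j: "j < 2*k+1" "int j = i + int k" using i by (auto simp: j_def)
    with H have "x (s - int k + int j) = c0 (int j - int k)" by (auto simp: cyl_def simp del: upt_Suc)
    then show "x (s + i) = c0 i" using j by simp
  qed
next
  assume H: "\<forall>i. \<bar>i\<bar> \<le> int k \<longrightarrow> x (s + i) = c0 i"
  show "x \<in> cyl (map (\<lambda>j. c0 (int j - int k)) [0..<2*k+1]) (s - int k)"
    unfolding cyl_def
  proof (intro CollectI allI impI)
    fix j assume "j < length (map (\<lambda>j. c0 (int j - int k)) [0..<2*k+1])"
    then have j: "j < 2*k+1" by simp
    then have "\<bar>int j - int k\<bar> \<le> int k" by linarith
    with H have "x (s + (int j - int k)) = c0 (int j - int k)" by blast
    then show "x (s - int k + int j) = map (\<lambda>j. c0 (int j - int k)) [0..<2*k+1] ! j" using j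
      by (simp add: algebra_simps del: upt_Suc)
  qed
qed

lemma per_nat: "(\<And>i. z (i + M) = z i) \<Longrightarrow> z (a + int n * M) = z (a::int)"
proof (induction n)
  case (Suc n)
  have "z (a + int (Suc n) * M) = z ((a + int n * M) + M)" by (simp add: algebra_simps)
  also have "\<dots> = z (a + int n * M)" by (rule Suc.prems)
  finally show ?case using Suc by simp
qed simp

lemma per_mod:
  assumes "\<And>i. z (i + M) = z i" "M > 0"
  shows "z (i mod M) = z (i::int)"
proof -
  have e: "i = i mod M + (i div M) * M" using mod_div_mult_eq[of i M] by simp
  show ?thesis
  proof (cases "i div M \<ge> 0")
    case True
    have "z (i mod M + int (nat (i div M)) * M) = z (i mod M)" by (rule per_nat[where z=z and M=M, OF assms(1)])
    then show ?thesis using True e by simp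
  next
    case False
    have "z (i + int (nat (- (i div M))) * M) = z i" by (rule per_nat[where z=z and M=M, OF assms(1)])
    moreover have "i + int (nat (- (i div M))) * M = i mod M" using False e by (simp add: algebra_simps)

    ultimately show ?thesis by simp
  qed
qed

lemma finite_periodic:
  assumes "M > 0"
  shows "finite {z :: int \<Rightarrow> 'q::finite. \<forall>i. z (i + M) = z i}"
proof (rule finite_subset)
  show "{z :: int \<Rightarrow> 'q. \<forall>i. z (i + M) = z i} \<subseteq> (\<lambda>g i. g (i mod M)) ` (Pi\<^sub>E {0..<M} (\<lambda>_. UNIV))"
  proof
    fix z :: "int \<Rightarrow> 'q" assume "z \<in> {z. \<forall>i. z (i + M) = z i}"
    then have per: "\<And>i. z (i + M) = z i" by simp
    have "z = (\<lambda>i. (restrict z {0..<M}) (i mod M))"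
      using per_mod[where z=z and M=M, OF per assms] assms by (auto simp: restrict_def)
    then show "z \<in> (\<lambda>g i. g (i mod M)) ` (Pi\<^sub>E {0..<M} (\<lambda>_. UNIV))" by auto
  qed
  show "finite ((\<lambda>g i. g (i mod M)) ` (Pi\<^sub>E {0..<M} (\<lambda>_. UNIV :: 'q set)))"
    by (intro finite_imageI finite_PiE) auto
qed

lemma disj_sep:
  fixes a a' L :: int
  assumes "\<bar>a - a'\<bar> \<ge> L"
  shows "{a..<a + L} \<inter> {a'..<a' + L} = {}"
proof (rule ccontr)
  assume "{a..<a + L} \<inter> {a'..<a' + L} \<noteq> {}"
  then obtain y where "y \<in> {a..<a + L} \<inter> {a'..<a' + L}" by blast
  then have "a \<le> y" "y < a + L" "a' \<le> y" "y < a' + L" by auto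
  with assms show False by linarith
qed

lemma persistent_brick:
  fixes \<delta> :: "('q::finite) list \<Rightarrow> 'q"
  assumes ns: "\<not> sensitive r \<delta>" and comp: "complete_bernoulli p" and une: "u \<noteq> []"
    and pers: "persistent r \<delta> p u"
  shows "u \<in> bricks_of_walls r \<delta>"
proof -
  interpret P: prob_space "bernoulli p" by (rule prob_bern)
  define push where "push n = push_cyl r \<delta> p n u" for n
  have push_nn: "push n \<ge> 0" for n by (simp add: push_def push_cyl_def)
  obtain \<epsilon> where eps: "\<epsilon> > 0" and inf: "\<And>N. \<exists>n\<ge>N. push n \<ge> \<epsilon>"
  proof -
    have "\<exists>\<epsilon>>0. \<forall>N. \<exists>n\<ge>N. push n \<ge> \<epsilon>"
    proof (rule ccontr)
      assume "\<not> (\<exists>\<epsilon>>0. \<forall>N. \<exists>n\<ge>N. push n \<ge> \<epsilon>)"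
      then have H: "\<And>\<epsilon>. \<epsilon> > 0 \<Longrightarrow> \<exists>N. \<forall>n\<ge>N. push n < \<epsilon>" by (meson not_le)
      have "push \<longlonglongrightarrow> 0"
      proof (rule LIMSEQ_I)
        fix e :: real assume "0 < e"
        from H[OF this] obtain N where "\<forall>n\<ge>N. push n < e" by blast
        then show "\<exists>no. \<forall>n\<ge>no. norm (push n - 0) < e" using push_nn by auto
      qed
      then show False using pers by (simp add: persistent_def push_def[abs_def])
    qed
    then show ?thesis using that by blast
  qed
  obtain c0 k where rk: "r \<le> k" and blk: "\<forall>c'. (\<forall>i. \<bar>i\<bar> \<le> int k \<longrightarrow> c' i = c0 i) \<longrightarrow>
           (\<forall>n i. \<bar>i\<bar> \<le> int r \<longrightarrow> (ca_global r \<delta> ^^ n) c' i = (ca_global r \<delta> ^^ n) c0 i)"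
    using blocking[OF ns] by blast
  define b where "b = map (\<lambda>j. c0 (int j - int k)) [0..<2*k+1]"
  have lb: "length b = 2*k+1" by (simp add: b_def)
  define q where "q = (\<Prod>j<length b. pmf p (b ! j))"
  have qpos: "q > 0" using comp by (auto simp: q_def complete_bernoulli_def intro!: prod_pos)
  have "1 - q < 1" using qpos by simp
  from real_arch_pow_inv[OF _ this, of "\<epsilon>/2"] eps obtain t where t: "(1 - q) ^ t < \<epsilon> / 2" by auto
  define Lk where "Lk = 2 * int k + 1"
  have Lkpos: "Lk > 0" by (simp add: Lk_def)
  have lbL: "int (length b) = Lk" by (simp add: lb Lk_def)
  define sLf where "sLf j = - ((int j + 1) * Lk)" for j :: nat
  define sRf where "sRf j = int (length u) + (int j + 1) * Lk" for j :: nat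
  define NL where "NL = {x. \<forall>j<t. x \<notin> cyl b (sLf j - int k)}"
  define NR where "NR = {x. \<forall>j<t. x \<notin> cyl b (sRf j - int k)}"
  have sep: "\<bar>(int j + 1) * Lk - (int j' + 1) * Lk\<bar> \<ge> Lk" if "j \<noteq> j'" for j j' :: nat
  proof -
    have "(int j + 1) * Lk - (int j' + 1) * Lk = (int j - int j') * Lk" by (simp add: algebra_simps)
    moreover have "\<bar>int j - int j'\<bar> \<ge> 1" using that by linarith
    then have "1 * Lk \<le> \<bar>int j - int j'\<bar> * Lk" using Lkpos by (intro mult_right_mono) auto
    ultimately show ?thesis using Lkpos by (simp add: abs_mult)
  qed
  have mNL: "measure (bernoulli p) NL = (1 - q) ^ t"
    unfolding NL_def q_def
  proof (rule no_occ_measure)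
    fix j j' :: nat assume "j \<noteq> j'"
    from sep[OF this] show "{sLf j - int k..<sLf j - int k + int (length b)} \<inter> {sLf j' - int k..<sLf j' - int k + int (length b)} = {}"
      unfolding lbL by (intro disj_sep) (simp add: sLf_def abs_minus_commute)
  qed
  have mNR: "measure (bernoulli p) NR = (1 - q) ^ t"
    unfolding NR_def q_def
  proof (rule no_occ_measure)
    fix j j' :: nat assume "j \<noteq> j'"
    from sep[OF this] show "{sRf j - int k..<sRf j - int k + int (length b)} \<inter> {sRf j' - int k..<sRf j' - int k + int (length b)} = {}"
      unfolding lbL by (intro disj_sep) (simp add: sRf_def)
  qed
  have sNL: "NL \<in> sets (bernoulli p)"
  proof -
    have "NL = space (bernoulli p) - (\<Union>j\<in>{..<t}. cyl b (sLf j - int k))" by (auto simp: NL_def)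
    also have "\<dots> \<in> sets (bernoulli p)" by (intro sets.Diff sets.top sets.finite_UN cyl_sets) auto
    finally show ?thesis .
  qed
  have sNR: "NR \<in> sets (bernoulli p)"
  proof -
    have "NR = space (bernoulli p) - (\<Union>j\<in>{..<t}. cyl b (sRf j - int k))" by (auto simp: NR_def)
    also have "\<dots> \<in> sets (bernoulli p)" by (intro sets.Diff sets.top sets.finite_UN cyl_sets) auto
    finally show ?thesis .
  qed
  define R where "R = (int t + 1) * Lk + int (length u)"
  define Mp where "Mp = 2 * R + 1"
  have "0 < (int t + 1) * Lk" by (rule mult_pos_pos) (use Lkpos in auto)
  then have Rpos: "R > 0" by (simp add: R_def)
  have Mppos: "Mp > 0" using Rpos by (simp add: Mp_def)
  define F where "F = {z :: int \<Rightarrow> 'q. \<forall>i. z (i + Mp) = z i}"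
  have finF: "finite F" unfolding F_def by (rule finite_periodic[OF Mppos])
  have Fcl: "ca_global r \<delta> z \<in> F" if "z \<in> F" for z
    using that ca_periodic[of z Mp r \<delta>] by (auto simp: F_def)
  obtain n where n1: "n \<ge> max (card F) 1" and n2: "push n \<ge> \<epsilon>" using inf by blast
  have "\<not> ((ca_global r \<delta> ^^ n) -` cyl u 0 \<subseteq> NL \<union> NR)"
  proof
    assume S: "(ca_global r \<delta> ^^ n) -` cyl u 0 \<subseteq> NL \<union> NR"
    have "push n \<le> measure (bernoulli p) (NL \<union> NR)"
      unfolding push_def push_cyl_def by (rule P.finite_measure_mono[OF S]) (intro sets.Un sNL sNR)
    also have "\<dots> \<le> measure (bernoulli p) NL + measure (bernoulli p) NR"
      by (rule measure_Un_le[OF sNL sNR])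
    also have "\<dots> < \<epsilon>" using t mNL mNR by simp
    finally show False using n2 by simp
  qed
  then obtain x where xu: "(ca_global r \<delta> ^^ n) x \<in> cyl u 0" and xNL: "x \<notin> NL" and xNR: "x \<notin> NR" by auto
  from xNL obtain jL where jL: "jL < t" "x \<in> cyl b (sLf jL - int k)" by (auto simp: NL_def)
  from xNR obtain jR where jR: "jR < t" "x \<in> cyl b (sRf jR - int k)" by (auto simp: NR_def)
  have xL: "\<forall>i. \<bar>i\<bar> \<le> int k \<longrightarrow> x (sLf jL + i) = c0 i" using jL(2) unfolding b_def blk_cyl .
  have xR: "\<forall>i. \<bar>i\<bar> \<le> int k \<longrightarrow> x (sRf jR + i) = c0 i" using jR(2) unfolding b_def blk_cyl .
  have m1: "(int jL + 1) * Lk \<le> int t * Lk" using jL(1) Lkpos by (intro mult_right_mono) auto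
  have m2: "(int jR + 1) * Lk \<le> int t * Lk" using jR(1) Lkpos by (intro mult_right_mono) auto
  have m3: "Lk \<le> (int jL + 1) * Lk" using Lkpos by simp
  have m4: "Lk \<le> (int jR + 1) * Lk" using Lkpos by simp
  have Rexp: "R = int t * Lk + Lk + int (length u)" by (simp add: R_def algebra_simps)
  have kL: "int k \<le> Lk" "int r \<le> int k" using rk by (auto simp: Lk_def)
  have bd1: "- R \<le> sLf jL - int k" unfolding sLf_def using m1 Rexp kL by linarith
  have bd2: "sRf jR + int k \<le> R" unfolding sRf_def using m2 Rexp kL by linarith
  have bd3: "sLf jL \<le> sRf jR" unfolding sLf_def sRf_def using m3 m4 Lkpos by linarith
  have bd4: "sLf jL - int r \<le> 0" unfolding sLf_def using m3 Lkpos by linarith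
  have bd5: "int (length u) \<le> sRf jR + int r" unfolding sRf_def using m4 Lkpos by linarith
  have Det: "(ca_global r \<delta> ^^ m) z i = (ca_global r \<delta> ^^ m) x i"
    if zx: "\<forall>i. - R \<le> i \<and> i \<le> R \<longrightarrow> z i = x i" and i: "0 \<le> i" "i < int (length u)" for z m i
  proof (rule region[OF blk rk xL xR bd3])
    show "\<forall>i. sLf jL - int k \<le> i \<and> i \<le> sRf jR + int k \<longrightarrow> z i = x i"
      using zx bd1 bd2 by auto
    show "sLf jL - int r \<le> i \<and> i \<le> sRf jR + int r" using i bd4 bd5 by linarith
  qed
  define y where "y = (\<lambda>i. x (- R + (i + R) mod Mp))"
  have yx: "y i = x i" if "- R \<le> i" "i \<le> R" for i
  proof -
    have "(i + R) mod Mp = i + R" using that by (intro mod_pos_pos_trivial) (auto simp: Mp_def)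
    then show ?thesis by (simp add: y_def)
  qed
  have yF: "y \<in> F"
  proof -
    have "(i + Mp + R) mod Mp = (i + R) mod Mp" for i
    proof -
      have "i + Mp + R = (i + R) + Mp" by simp
      then show ?thesis by (simp only: mod_add_self2)
    qed
    then show ?thesis by (simp add: F_def y_def)
  qed
  have DetY: "(ca_global r \<delta> ^^ m) z i = (ca_global r \<delta> ^^ m) y i"
    if zy: "\<forall>i. - R \<le> i \<and> i \<le> R \<longrightarrow> z i = y i" and i: "0 \<le> i" "i < int (length u)" for z m i
  proof -
    have "(ca_global r \<delta> ^^ m) z i = (ca_global r \<delta> ^^ m) x i"
      using zy yx i by (intro Det) auto
    moreover have "(ca_global r \<delta> ^^ m) y i = (ca_global r \<delta> ^^ m) x i"
      using yx i by (intro Det) auto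
    ultimately show ?thesis by simp
  qed
  have yu: "(ca_global r \<delta> ^^ n) y (int kk) = u ! kk" if "kk < length u" for kk
  proof -
    have "(ca_global r \<delta> ^^ n) y (int kk) = (ca_global r \<delta> ^^ n) x (int kk)"
      using yx that by (intro Det) auto
    then show ?thesis using xu that by (simp add: cyl_def)
  qed
  obtain Pd where Pd1: "Pd \<ge> 1" and Pd: "\<forall>m\<ge>card F. \<forall>j. (ca_global r \<delta> ^^ (m + Pd * j)) y = (ca_global r \<delta> ^^ m) y"
    using eventually_periodic[of F "ca_global r \<delta>" y] finF Fcl yF by blast
  define av where "av = cs (length u)"
  define z0 where "z0 = (\<lambda>i. y (i + - av))"
  have z0it: "(ca_global r \<delta> ^^ m) z0 = (\<lambda>i. (ca_global r \<delta> ^^ m) y (i + - av))" for m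
    unfolding z0_def by (rule iter_shift)
  define R' where "R' = R + \<bar>av\<bar> + 1"
  define L0 where "L0 = nat (2 * R')"
  have R'pos: "R' > 0" using Rpos by (simp add: R'_def)
  have L0i: "int L0 = 2 * R'" using R'pos by (simp add: L0_def)
  define foot where "foot = map (\<lambda>kk. z0 (- R' + int kk)) [0..<L0]"
  define w where "w = (\<lambda>m. if m = 0 then foot else map (\<lambda>kk. (ca_global r \<delta> ^^ m) z0 (av + int kk)) [0..<length u])"
  have csL0: "cs L0 = - R'"
  proof -
    have ev: "even L0" using L0i by presburger
    have "cs L0 = - (int L0 div 2)" using ev unfolding cs_def by (simp only: if_True)
    also have "int L0 div 2 = R'" unfolding L0i by simp
    finally show ?thesis .
  qed
  have uR: "int (length u) \<le> R" unfolding R_def using \<open>0 < (int t + 1) * Lk\<close> by linarith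
  have "int (length u) \<le> int L0" using L0i uR Rpos abs_ge_zero[of av] unfolding R'_def by (smt (verit))
  then have L0u: "length u \<le> L0" by linarith
  have wall: "is_wall r \<delta> w"
    unfolding is_wall_def
  proof (intro conjI allI ballI impI)
    fix m show "w m \<noteq> []" using une R'pos L0i by (auto simp: w_def foot_def)
  next
    fix m show "length (w (Suc m)) \<le> length (w m)" using L0u by (auto simp: w_def foot_def)
  next
    fix c and m :: nat assume c: "c \<in> centered_cyl (w 0)" and m: "1 \<le> m"
    have cz: "c i = z0 i" if "- R' \<le> i" "i < R'" for i
    proof -
      have "nat (i + R') < L0" using that L0i by linarith
      with c have "c (- R' + int (nat (i + R'))) = foot ! nat (i + R')"
        by (auto simp: centered_eq w_def csL0 foot_def cyl_def)
      with \<open>nat (i + R') < L0\<close> show ?thesis using that by (simp add: foot_def)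
    qed
    define c' where "c' = (\<lambda>i. c (i + av))"
    have c'y: "\<forall>i. - R \<le> i \<and> i \<le> R \<longrightarrow> c' i = y i"
    proof (intro allI impI)
      fix i assume "- R \<le> i \<and> i \<le> R"
      then have "c (i + av) = z0 (i + av)" by (intro cz) (auto simp: R'_def)
      then show "c' i = y i" by (simp add: c'_def z0_def)
    qed
    have c'it: "(ca_global r \<delta> ^^ m) c' = (\<lambda>i. (ca_global r \<delta> ^^ m) c (i + av))"
      unfolding c'_def by (rule iter_shift)
    have "(ca_global r \<delta> ^^ m) c (av + int kk) = w m ! kk" if kk: "kk < length u" for kk
    proof -
      have "(ca_global r \<delta> ^^ m) c (av + int kk) = (ca_global r \<delta> ^^ m) c' (int kk)"
        by (simp add: c'it add.commute)
      also have "\<dots> = (ca_global r \<delta> ^^ m) y (int kk)" using kk by (intro DetY c'y) auto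
      also have "\<dots> = (ca_global r \<delta> ^^ m) z0 (av + int kk)" by (simp add: z0it)
      also have "\<dots> = w m ! kk" using m kk by (simp add: w_def)
      finally show ?thesis .
    qed
    moreover have "length (w m) = length u" using m by (simp add: w_def)
    ultimately show "(ca_global r \<delta> ^^ m) c \<in> centered_cyl (w m)"
      by (simp add: centered_eq cyl_def av_def)
  qed
  have bj: "\<forall>j. w (Pd * j + n) = u"
  proof
    fix j
    have nF: "n \<ge> card F" "n \<ge> 1" using n1 by auto
    have "w (Pd * j + n) = map (\<lambda>kk. (ca_global r \<delta> ^^ (n + Pd * j)) z0 (av + int kk)) [0..<length u]"
      using nF by (simp add: w_def add.commute)
    also have "\<dots> = map (\<lambda>kk. (ca_global r \<delta> ^^ n) y (int kk)) [0..<length u]"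
      using Pd nF by (simp add: z0it)
    also have "\<dots> = u" by (rule nth_equalityI) (auto simp: yu)
    finally show "w (Pd * j + n) = u" .
  qed
  have brick: "is_brick w u"
    unfolding is_brick_def using Pd1 bj by blast
  show ?thesis using wall brick by (auto simp: bricks_of_walls_def)
qed

theorem mainTheorem1:
  fixes r :: nat and \<delta> :: "('q::finite) list \<Rightarrow> 'q" and p :: "'q pmf"
  assumes "\<not> sensitive r \<delta>"
    and "complete_bernoulli p"
  shows "{u \<in> persistent_words r \<delta> p. u \<noteq> []} = bricks_of_walls r \<delta>"
proof
  show "{u \<in> persistent_words r \<delta> p. u \<noteq> []} \<subseteq> bricks_of_walls r \<delta>"
    using persistent_brick[OF assms(1,2)] by (auto simp: persistent_words_def)
  show "bricks_of_walls r \<delta> \<subseteq> {u \<in> persistent_words r \<delta> p. u \<noteq> []}"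
    using bricks_persistent[OF assms(2)] by auto
qed

end
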